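(* Under the standing assumptions, if $a<0$ then $z(\theta)$ is negative and strictly increasing on $(\pi/2,\pi)$.
   Context: Standing assumptions: $a,b\in\mathbb{R}$ with $b>0$, $1+a+b>0$, $9-27a+b>0$, $2-8a+8a^2+ab\ne0$, $b+1-a\ne0$. Let $f^*(\zeta,\theta)=(\zeta+2\cos\theta)(2\zeta\cos\theta+1)+b\zeta-a(\zeta+2\cos\theta)^3$. Under these assumptions, for each $\theta\in(\pi/2,\pi)$ the polynomial $f^*(\cdot,\theta)$ has exactly one real zero in $(-1,1)$; denote it $w(\theta)$ (so $\zeta(\theta)=1/w(\theta)$). Define $\tau(\theta)=-w(\theta)-2\cos\theta$ and $z(\theta)=-\dfrac{w(\theta)}{\tau(\theta)^3}$ (i.e. $z=-1/(\zeta\tau^3)$). *)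

theory Defs
  imports Complex_Main
begin

definition fstar :: "real \<Rightarrow> real \<Rightarrow> real \<Rightarrow> real \<Rightarrow> real" where
  "fstar a b \<zeta> \<theta> = (\<zeta> + 2 * cos \<theta>) * (2 * \<zeta> * cos \<theta> + 1) + b * \<zeta>
      - a * (\<zeta> + 2 * cos \<theta>) ^ 3"

text \<open>The unique real zero of fstar a b (.) theta in the open interval (-1,1)
  (its uniqueness for theta in (pi/2, pi) is part of the standing assumptions).\<close>
definition wzero :: "real \<Rightarrow> real \<Rightarrow> real \<Rightarrow> real" where
  "wzero a b \<theta> = (THE x. -1 < x \<and> x < 1 \<and> fstar a b x \<theta> = 0)"

definition tau :: "real \<Rightarrow> real \<Rightarrow> real \<Rightarrow> real" where
  "tau a b \<theta> = - wzero a b \<theta> - 2 * cos \<theta>"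

definition zfun :: "real \<Rightarrow> real \<Rightarrow> real \<Rightarrow> real" where
  "zfun a b \<theta> = - wzero a b \<theta> / (tau a b \<theta>) ^ 3"

end

theory Submission
  imports Defs
begin

definition fc :: "real \<Rightarrow> real \<Rightarrow> real \<Rightarrow> real \<Rightarrow> real" where
  "fc a b c w = (w + 2 * c) * (2 * c * w + 1) + b * w - a * (w + 2 * c) ^ 3"

lemma fstar_fc: "fstar a b w \<theta> = fc a b (cos \<theta>) w"
  by (simp add: fstar_def fc_def)

lemma fc_mono:
  fixes a b c x y :: real
  assumes "a < 0" "b > 0" "-1 < c" "c < 0" "-1 < x" "x < y" "y < 1"
  shows "fc a b c x < fc a b c y"
proof -
  define ux where "ux = x + 2*c"
  define uy where "uy = y + 2*c"
  have q: "uy^2 + uy*ux + ux^2 \<ge> 0"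
  proof -
    have "uy^2 + uy*ux + ux^2 = (uy + ux/2)^2 + 3/4*ux^2" by (simp add: power2_eq_square algebra_simps)
    moreover have "(uy + ux/2)^2 + 3/4*ux^2 \<ge> 0" by simp
    ultimately show ?thesis by simp
  qed
  have q2: "-a * (uy^2 + uy*ux + ux^2) \<ge> 0" using q assms by (simp add: mult_nonpos_nonneg)
  have "c * 2 < c * (x + y)" by (rule mult_strict_left_mono_neg) (use assms in auto)
  hence s1: "c * (x + y) > 2 * c" by simp
  have s2: "(2*c+1)^2 \<ge> 0" by simp
  have br: "-a * (uy^2 + uy*ux + ux^2) + 2*c*(x+y) + 4*c^2 + 1 + b > 0"
    using q2 s1 s2 assms by (simp add: power2_eq_square algebra_simps) 
  have "fc a b c y - fc a b c x = (y - x) * (-a * (uy^2 + uy*ux + ux^2) + 2*c*(x+y) + 4*c^2 + 1 + b)"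
    unfolding fc_def ux_def uy_def by (simp add: algebra_simps power2_eq_square power3_eq_cube)
  moreover have "(y - x) * (-a * (uy^2 + uy*ux + ux^2) + 2*c*(x+y) + 4*c^2 + 1 + b) > 0"
    using br assms by simp
  ultimately show ?thesis by simp
qed

lemma fc_one_pos:
  fixes a b c :: real
  assumes "a < 0" "b > 0" "1 + a + b > 0" "-1 < c" "c < 0"
  shows "fc a b c 1 > 0"
proof -
  define v where "v = 1 + 2*c"
  have e: "fc a b c 1 = v^2 * (1 - a*v) + b"
    unfolding fc_def v_def by (simp add: algebra_simps power2_eq_square power3_eq_cube)
  have "v^2 * (1 - a*v) + b > 0"
  proof (cases "1 - a*v \<ge> 0")
    case True
    have "v^2 * (1 - a*v) \<ge> 0" using True by simp
    then show ?thesis using assms by simp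
  next
    case False
    have v1: "v > -1" using assms v_def by simp
    have "(-a) * (-1) < (-a) * v"
      by (rule mult_strict_left_mono) (use v1 assms in auto)
    hence g: "1 - a*v > 1 + a" by simp
    have "a * v > 0" using False by simp
    hence "v < 0" using assms by (simp add: zero_less_mult_iff)
    hence "\<bar>v\<bar> < 1" using v1 by simp
    hence v2: "v^2 < 1" by (simp add: abs_square_less_1)
    have "v^2 * (1 + a) \<le> v^2 * (1 - a*v)" using g by (simp add: mult_left_mono)
    moreover have "1 * (1 + a) \<le> v^2 * (1 + a)"
      by (rule mult_right_mono_neg) (use False g v2 in auto)
    ultimately show ?thesis using assms by simp
  qed
  thus ?thesis using e by simp
qed

lemma fc_zero_neg:
  fixes a b c :: real
  assumes "a < 0" "c < 0"
  shows "fc a b c 0 < 0"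
proof -
  have e: "fc a b c 0 = 2*c*(1 - 4*a*c^2)"
    unfolding fc_def by (simp add: algebra_simps power2_eq_square power3_eq_cube)
  have "a * c^2 \<le> 0" using assms by (simp add: mult_nonpos_nonneg)
  hence "1 - 4*a*c^2 > 0" by simp
  hence "2*c*(1 - 4*a*c^2) < 0" using assms by (simp add: mult_neg_pos)
  thus ?thesis using e by simp
qed

lemma fc_m2c:
  fixes a b c :: real
  assumes "b > 0" "c < 0"
  shows "fc a b c (-2*c) > 0"
proof -
  have e: "fc a b c (-2*c) = -2*b*c"
    unfolding fc_def by (simp add: algebra_simps power2_eq_square power3_eq_cube)
  have "b * c < 0" using assms by (simp add: mult_pos_neg)
  thus ?thesis using e by simp
qed

lemma fc_root:
  fixes a b c :: real
  assumes "a < 0" "b > 0" "1 + a + b > 0" "-1 < c" "c < 0"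
  shows "\<exists>w. 0 < w \<and> w < 1 \<and> w < -2*c \<and> fc a b c w = 0"
proof -
  define m where "m = min 1 (-2*c)"
  have mpos: "fc a b c m > 0"
    using fc_one_pos[OF assms] fc_m2c[of b c a] assms unfolding m_def by (cases "1 \<le> -2*c") auto
  have m0: "0 \<le> m" using assms unfolding m_def by simp
  have cont: "continuous_on {0..m} (fc a b c)"
    unfolding fc_def by (intro continuous_intros)
  obtain x where x: "0 \<le> x" "x \<le> m" "fc a b c x = 0"
    using IVT'[of "fc a b c" 0 0 m] fc_zero_neg[of a c b] assms mpos m0 cont by auto
  have "x \<noteq> 0" using x fc_zero_neg[of a c b] assms by auto
  moreover have "x \<noteq> m" using x mpos by auto
  ultimately have "0 < x" "x < m" using x by auto
  thus ?thesis using x unfolding m_def by auto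
qed

lemma fc_unique:
  fixes a b c :: real
  assumes "a < 0" "b > 0" "-1 < c" "c < 0"
    and "-1 < x" "x < 1" "fc a b c x = 0" "-1 < y" "y < 1" "fc a b c y = 0"
  shows "x = y"
proof (rule ccontr)
  assume "x \<noteq> y"
  hence "x < y \<or> y < x" by auto
  thus False using fc_mono[of a b c x y] fc_mono[of a b c y x] assms by auto
qed

lemma wzero_props:
  fixes a b \<theta> :: real
  assumes "a < 0" "b > 0" "1 + a + b > 0" "\<theta> \<in> {pi/2<..<pi}"
  shows "-1 < cos \<theta> \<and> cos \<theta> < 0 \<and> 0 < wzero a b \<theta> \<and> wzero a b \<theta> < 1
    \<and> wzero a b \<theta> < -2 * cos \<theta> \<and> fc a b (cos \<theta>) (wzero a b \<theta>) = 0"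
proof -
  have c1: "cos pi < cos \<theta>" using assms by (intro cos_monotone_0_pi) auto
  have c2: "cos \<theta> < cos (pi/2)" using assms by (intro cos_monotone_0_pi) auto
  have cb: "-1 < cos \<theta>" "cos \<theta> < 0" using c1 c2 by auto
  obtain w where w: "0 < w" "w < 1" "w < -2 * cos \<theta>" "fc a b (cos \<theta>) w = 0"
    using fc_root[OF assms(1-3) cb] by auto
  have "wzero a b \<theta> = w"
    unfolding wzero_def fstar_fc
  proof (rule the_equality)
    show "-1 < w \<and> w < 1 \<and> fc a b (cos \<theta>) w = 0" using w by auto
  next
    fix x assume "-1 < x \<and> x < 1 \<and> fc a b (cos \<theta>) x = 0"
    thus "x = w" using fc_unique[of a b "cos \<theta>" x w] w cb assms by auto
  qed
  thus ?thesis using w cb by auto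
qed

lemma tau_shift:
  fixes a b c w t :: real
  assumes "t = - w - 2 * c"
  shows "fc a b c w = t * (w^2 + w*t - 1) + b*w + a*t^3"
proof -
  have u: "w + 2*c = -t" using assms by simp
  have c2: "2*c = -t - w" using assms by simp
  have v: "2*c*w = -t*w - w^2" unfolding c2 by (simp add: algebra_simps power2_eq_square)
  have "fc a b c w = (-t) * (2*c*w + 1) + b*w - a*(-t)^3" unfolding fc_def by (simp only: u)
  also have "\<dots> = (-t) * (-t*w - w^2 + 1) + b*w - a*(-t)^3" by (simp only: v)
  also have "\<dots> = t * (w^2 + w*t - 1) + b*w + a*t^3" by (simp add: algebra_simps power3_eq_cube)
  finally show ?thesis .
qed

lemma tau_order:
  fixes a b c1 c2 w1 w2 :: real
  assumes "a < 0" "b > 0" "-1 < c2" "c2 < c1" "c1 < 0"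
    and "0 < w1" "w1 < 1" "w1 < -2*c1" "fc a b c1 w1 = 0"
    and "0 < w2" "w2 < 1" "w2 < -2*c2" "fc a b c2 w2 = 0"
  shows "w1 + 2*c1 > w2 + 2*c2"
proof (rule ccontr)
  assume H: "\<not> w1 + 2*c1 > w2 + 2*c2"
  define u1 where "u1 = w1 + 2*c1"
  define x where "x = u1 - 2*c2"
  have x0: "0 < x" using assms unfolding x_def u1_def by simp
  have xw: "x \<le> w2" using H unfolding x_def u1_def by simp
  have diff: "fc a b c2 x - fc a b c1 w1 = (c2 - c1) * (2*u1*(w1 - 2*c2) - 2*b)"
    unfolding fc_def x_def u1_def by (simp add: algebra_simps power2_eq_square power3_eq_cube)
  have "u1 * (w1 - 2*c2) < 0" using assms unfolding u1_def by (simp add: mult_neg_pos)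
  hence "2*u1*(w1 - 2*c2) - 2*b < 0" using assms by simp
  hence "(c2 - c1) * (2*u1*(w1 - 2*c2) - 2*b) > 0" using assms by (simp add: mult_neg_neg)
  hence pos: "fc a b c2 x > 0" using diff assms by simp
  show False
  proof (cases "x = w2")
    case True thus False using pos assms by simp
  next
    case False
    hence "x < w2" using xw by simp
    hence "fc a b c2 x < fc a b c2 w2" using fc_mono[of a b c2 x w2] assms x0 by simp
    thus False using pos assms by simp
  qed
qed

definition Qf :: "real \<Rightarrow> real \<Rightarrow> real \<Rightarrow> real \<Rightarrow> real" where
  "Qf a b s z = z^2*s^2 - z*s - b*z - 1/s + a"

lemma Qf_zero:
  fixes a b c w t :: real
  assumes "t = - w - 2 * c" "t > 0" "fc a b c w = 0"
  shows "Qf a b (t^2) (-w/t^3) = 0"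
proof -
  have G: "t * (w^2 + w*t - 1) + b*w + a*t^3 = 0" using tau_shift[OF assms(1)] assms by simp
  have "Qf a b (t^2) (-w/t^3) = (t * (w^2 + w*t - 1) + b*w + a*t^3) / t^3"
    unfolding Qf_def using assms(2) by (simp add: field_simps power2_eq_square power3_eq_cube)
  thus ?thesis using G by simp
qed

lemma Qf_order:
  fixes a b s1 s2 z1 z2 :: real
  assumes "b > 0" "0 < s1" "s1 < s2" "z1 < 0" "z2 < 0" "Qf a b s1 z1 = 0" "Qf a b s2 z2 = 0"
  shows "z1 < z2"
proof (rule ccontr)
  assume H: "\<not> z1 < z2"
  have d1: "Qf a b s2 z1 - Qf a b s1 z1 = z1^2*(s2^2 - s1^2) - z1*(s2 - s1) + (1/s1 - 1/s2)"
    unfolding Qf_def by (simp add: algebra_simps)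
  have "s1^2 < s2^2" using assms by (simp add: power_strict_mono)
  hence p1: "z1^2*(s2^2 - s1^2) \<ge> 0" by simp
  have p2: "- z1*(s2 - s1) > 0" using assms by (simp add: mult_neg_pos)
  have p3: "1/s1 - 1/s2 > 0" using assms by (simp add: frac_less2)
  have A: "Qf a b s2 z1 > 0" using d1 p1 p2 p3 assms(6) by linarith
  have d2: "Qf a b s2 z1 - Qf a b s2 z2 = (z1 - z2) * (s2^2*(z1+z2) - s2 - b)"
    unfolding Qf_def by (simp add: algebra_simps power2_eq_square)
  have "s2^2*(z1+z2) \<le> 0" using assms by (simp add: mult_nonneg_nonpos)
  hence "s2^2*(z1+z2) - s2 - b < 0" using assms by simp
  moreover have "z1 - z2 \<ge> 0" using H by simp
  ultimately have "(z1 - z2) * (s2^2*(z1+z2) - s2 - b) \<le> 0" by (simp add: mult_nonneg_nonpos)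
  thus False using A d2 assms by simp
qed

theorem mainTheorem14:
  fixes a b :: real
  assumes "b > 0" and "1 + a + b > 0" and "9 - 27 * a + b > 0"
    and "2 - 8 * a + 8 * a ^ 2 + a * b \<noteq> 0" and "b + 1 - a \<noteq> 0"
    and "a < 0"
  shows "(\<forall>\<theta>\<in>{pi/2<..<pi}. zfun a b \<theta> < 0) \<and> strict_mono_on {pi/2<..<pi} (zfun a b)"
proof -
  note P = wzero_props[OF assms(6) assms(1) assms(2)]
  have tpos: "tau a b \<theta> > 0" if "\<theta> \<in> {pi/2<..<pi}" for \<theta>
    using P[OF that] unfolding tau_def by simp
  have zneg: "zfun a b \<theta> < 0" if "\<theta> \<in> {pi/2<..<pi}" for \<theta>
  proof -
    have "wzero a b \<theta> > 0" using P[OF that] by simp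
    moreover have "tau a b \<theta> ^ 3 > 0" using tpos[OF that] by simp
    ultimately show ?thesis unfolding zfun_def by (simp add: divide_pos_pos)
  qed
  have Q: "Qf a b ((tau a b \<theta>)^2) (zfun a b \<theta>) = 0" if "\<theta> \<in> {pi/2<..<pi}" for \<theta>
    unfolding zfun_def
    by (rule Qf_zero[of _ _ "cos \<theta>"]) (use P[OF that] tpos[OF that] in \<open>auto simp: tau_def\<close>)
  have "strict_mono_on {pi/2<..<pi} (zfun a b)"
  proof (rule strict_mono_onI)
    fix r s assume r: "r \<in> {pi/2<..<pi}" and s: "s \<in> {pi/2<..<pi}" and rs: "r < s"
    have cc: "cos s < cos r" using r s rs by (intro cos_monotone_0_pi) auto
    have "wzero a b r + 2 * cos r > wzero a b s + 2 * cos s"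
      using tau_order[of a b "cos s" "cos r" "wzero a b r" "wzero a b s"] P[OF r] P[OF s] cc assms
      by auto
    hence tt: "tau a b r < tau a b s" unfolding tau_def by simp
    have "(tau a b r)^2 < (tau a b s)^2" using tt tpos[OF r] by (simp add: power_strict_mono)
    thus "zfun a b r < zfun a b s"
      using Qf_order[of b "(tau a b r)^2" "(tau a b s)^2" "zfun a b r" "zfun a b s" a]
        assms tpos[OF r] zneg[OF r] zneg[OF s] Q[OF r] Q[OF s] by simp
  qed
  thus ?thesis using zneg by auto
qed

end
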